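(* Let $a_{n,0}$ denote the number of matchings of size $n$ with no occurrence of the endhered pattern $21$. For any $n\ge0$, $$a_{n+1,0}=\sum_{k=0}^{n}(-1)^{n-k}\binom{n}{k}(2k+1)!!,$$ where $m!!$ is the double factorial ($m(m-2)(m-4)\cdots$ down to $2$ or $1$).
   Context: A matching of size $n$ is a set of $n$ arcs $(a,b)$ with $1\le a<b\le 2n$ such that each point of $\{1,\dots,2n\}$ belongs to exactly one arc. An occurrence of the endhered pattern $21$ in a matching $\mu$ is a pair of arcs of $\mu$ of the form $(i+1,j+2),(i+2,j+1)$ (two nested arcs with consecutive starting points and consecutive ending points). *)

theory Defs
  imports Main
begin

definition is_matching :: "nat \<Rightarrow> (nat \<times> nat) set \<Rightarrow> bool" where
  "is_matching n \<mu> \<longleftrightarrow>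
     (\<forall>(a,b)\<in>\<mu>. 1 \<le> a \<and> a < b \<and> b \<le> 2*n) \<and>
     (\<forall>p\<in>{1..2*n}. \<exists>!e\<in>\<mu>. fst e = p \<or> snd e = p)"

definition has_endhered_21 :: "(nat \<times> nat) set \<Rightarrow> bool" where
  "has_endhered_21 \<mu> \<longleftrightarrow> (\<exists>i j. (i+1, j+2) \<in> \<mu> \<and> (i+2, j+1) \<in> \<mu>)"

definition a0 :: "nat \<Rightarrow> nat" where
  "a0 n = card {\<mu>. is_matching n \<mu> \<and> \<not> has_endhered_21 \<mu>}"

fun dfact :: "nat \<Rightarrow> nat" where
  "dfact 0 = 1"
| "dfact (Suc 0) = 1"
| "dfact (Suc (Suc m)) = Suc (Suc m) * dfact m"

end

theory Submission
  imports Defs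
begin

definition mm :: "nat \<Rightarrow> (nat \<times> nat) set \<Rightarrow> bool" where
  "mm n \<mu> \<longleftrightarrow> (\<forall>(a,b)\<in>\<mu>. 1 \<le> a \<and> a < b \<and> b \<le> 2*n) \<and>
     (\<forall>p\<in>{1..2*n}. \<exists>e\<in>\<mu>. fst e = p \<or> snd e = p) \<and>
     (\<forall>e\<in>\<mu>. \<forall>e'\<in>\<mu>. (fst e = fst e' \<or> fst e = snd e' \<or> snd e = fst e' \<or> snd e = snd e') \<longrightarrow> e = e')"

lemma matching_iff: "is_matching n \<mu> \<longleftrightarrow> mm n \<mu>"
proof
  assume H: "is_matching n \<mu>"
  have R: "\<forall>(a,b)\<in>\<mu>. 1 \<le> a \<and> a < b \<and> b \<le> 2*n" using H unfolding is_matching_def by blast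
  have U: "\<forall>p\<in>{1..2*n}. \<exists>!e\<in>\<mu>. fst e = p \<or> snd e = p" using H unfolding is_matching_def by blast
  have uniq: "e = e'" if "x \<in> {1..2*n}" "e\<in>\<mu>" "e'\<in>\<mu>" "fst e = x \<or> snd e = x" "fst e' = x \<or> snd e' = x" for x e e'
  proof -
    have "\<exists>!e. e \<in> \<mu> \<and> (fst e = x \<or> snd e = x)" using U that(1) by blast
    thus ?thesis using that by blast
  qed
  show "mm n \<mu>" unfolding mm_def
  proof (intro conjI)
    show "\<forall>p\<in>{1..2*n}. \<exists>e\<in>\<mu>. fst e = p \<or> snd e = p" using U by blast
    show "\<forall>e\<in>\<mu>. \<forall>e'\<in>\<mu>. (fst e = fst e' \<or> fst e = snd e' \<or> snd e = fst e' \<or> snd e = snd e') \<longrightarrow> e = e'"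
    proof (intro ballI impI)
      fix e e' assume e: "e \<in> \<mu>" and e': "e' \<in> \<mu>" and sh: "fst e = fst e' \<or> fst e = snd e' \<or> snd e = fst e' \<or> snd e = snd e'"
      have r1: "1 \<le> fst e \<and> fst e < snd e \<and> snd e \<le> 2*n" using R e by auto
      have r2: "1 \<le> fst e' \<and> fst e' < snd e' \<and> snd e' \<le> 2*n" using R e' by auto
      from sh show "e = e'"
      proof (elim disjE)
        assume "fst e = fst e'" thus ?thesis using uniq[of "fst e" e e'] r1 r2 e e' by auto
      next
        assume "fst e = snd e'" thus ?thesis using uniq[of "fst e" e e'] r1 r2 e e' by auto
      next
        assume "snd e = fst e'" thus ?thesis using uniq[of "snd e" e e'] r1 r2 e e' by auto
      next
        assume "snd e = snd e'" thus ?thesis using uniq[of "snd e" e e'] r1 r2 e e' by auto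
      qed
    qed
  qed (use R in auto)
next
  assume "mm n \<mu>"
  thus "is_matching n \<mu>" unfolding mm_def is_matching_def by blast
qed

definition dl :: "nat \<Rightarrow> nat \<Rightarrow> nat \<Rightarrow> nat" where
  "dl p q x = (if x < p then x else if x < q then x - 1 else x - 2)"
definition il :: "nat \<Rightarrow> nat \<Rightarrow> nat \<Rightarrow> nat" where
  "il p q y = (if y < p then y else if y + 1 < q then y + 1 else y + 2)"

definition rm :: "nat \<Rightarrow> nat \<Rightarrow> (nat \<times> nat) set \<Rightarrow> (nat \<times> nat) set" where
  "rm p q \<mu> = map_prod (dl p q) (dl p q) ` (\<mu> - {(p,q)})"
definition ad :: "nat \<Rightarrow> nat \<Rightarrow> (nat \<times> nat) set \<Rightarrow> (nat \<times> nat) set" where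
  "ad p q \<nu> = insert (p,q) (map_prod (il p q) (il p q) ` \<nu>)"

lemma il_ne: "p < q \<Longrightarrow> il p q y \<noteq> p \<and> il p q y \<noteq> q"
  by (auto simp: il_def)
lemma dl_il: "p < q \<Longrightarrow> dl p q (il p q y) = y"
  by (auto simp: il_def dl_def)
lemma il_dl: "p < q \<Longrightarrow> x \<noteq> p \<Longrightarrow> x \<noteq> q \<Longrightarrow> il p q (dl p q x) = x"
  by (auto simp: il_def dl_def)
lemma il_mono: "p < q \<Longrightarrow> y < y' \<Longrightarrow> il p q y < il p q y'"
  by (auto simp: il_def)
lemma il_less_iff: "p < q \<Longrightarrow> il p q y < il p q y' \<longleftrightarrow> y < y'"
  by (auto simp: il_def)
lemma dl_mono: "p < q \<Longrightarrow> x \<noteq> p \<Longrightarrow> x \<noteq> q \<Longrightarrow> x' \<noteq> p \<Longrightarrow> x' \<noteq> q \<Longrightarrow> x < x' \<Longrightarrow> dl p q x < dl p q x'"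
  by (auto simp: dl_def)
lemma dl_inj: "p < q \<Longrightarrow> x \<noteq> p \<Longrightarrow> x \<noteq> q \<Longrightarrow> x' \<noteq> p \<Longrightarrow> x' \<noteq> q \<Longrightarrow> dl p q x = dl p q x' \<Longrightarrow> x = x'"
  by (metis il_dl)
lemma dl_range: "1 \<le> p \<Longrightarrow> p < q \<Longrightarrow> q \<le> 2*n+2 \<Longrightarrow> 1 \<le> x \<Longrightarrow> x \<le> 2*n+2 \<Longrightarrow> x \<noteq> p \<Longrightarrow> x \<noteq> q
   \<Longrightarrow> 1 \<le> dl p q x \<and> dl p q x \<le> 2*n"
  by (auto simp: dl_def)
lemma il_range: "1 \<le> p \<Longrightarrow> p < q \<Longrightarrow> q \<le> 2*n+2 \<Longrightarrow> 1 \<le> y \<Longrightarrow> y \<le> 2*n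
   \<Longrightarrow> 1 \<le> il p q y \<and> il p q y \<le> 2*n+2"
  by (auto simp: il_def)

lemma mm_range: "mm n \<mu> \<Longrightarrow> e \<in> \<mu> \<Longrightarrow> 1 \<le> fst e \<and> fst e < snd e \<and> snd e \<le> 2*n"
  unfolding mm_def by auto
lemma mm_cover: "mm n \<mu> \<Longrightarrow> x \<in> {1..2*n} \<Longrightarrow> \<exists>e\<in>\<mu>. fst e = x \<or> snd e = x"
  unfolding mm_def by auto
lemma mm_uniq: "mm n \<mu> \<Longrightarrow> e \<in> \<mu> \<Longrightarrow> e' \<in> \<mu> \<Longrightarrow> fst e = fst e' \<or> fst e = snd e' \<or> snd e = fst e' \<or> snd e = snd e' \<Longrightarrow> e = e'"
  unfolding mm_def by blast

lemma mm_other: "mm n \<mu> \<Longrightarrow> (p,q) \<in> \<mu> \<Longrightarrow> e \<in> \<mu> \<Longrightarrow> e \<noteq> (p,q) \<Longrightarrow>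
   fst e \<noteq> p \<and> fst e \<noteq> q \<and> snd e \<noteq> p \<and> snd e \<noteq> q"
  using mm_uniq[of n \<mu> e "(p,q)"] by auto

lemma rm_mm:
  assumes M: "mm (Suc n) \<mu>" and pq: "(p,q) \<in> \<mu>"
  shows "mm n (rm p q \<mu>)"
proof -
  have r: "1 \<le> p" "p < q" "q \<le> 2*n+2" using mm_range[OF M pq] by auto
  show ?thesis unfolding mm_def
  proof (intro conjI ballI impI)
    fix z assume "z \<in> rm p q \<mu>"
    then obtain e where z: "z = map_prod (dl p q) (dl p q) e" and e0: "e \<in> \<mu> - {(p,q)}" unfolding rm_def by (rule imageE)
    have e: "e \<in> \<mu>" "e \<noteq> (p,q)" using e0 by auto
    have o: "fst e \<noteq> p \<and> fst e \<noteq> q \<and> snd e \<noteq> p \<and> snd e \<noteq> q" using mm_other[OF M pq e] .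
    have re: "1 \<le> fst e \<and> fst e < snd e \<and> snd e \<le> 2*n+2" using mm_range[OF M e(1)] by simp
    show "case z of (a,b) \<Rightarrow> 1 \<le> a \<and> a < b \<and> b \<le> 2*n"
      using z dl_range[OF r, of "fst e"] dl_range[OF r, of "snd e"] dl_mono[OF r(2), of "fst e" "snd e"] o re
      by (cases e) auto
  next
    fix y assume y: "y \<in> {1..2*n}"
    let ?x = "il p q y"
    have x: "?x \<in> {1..2*(Suc n)}" using il_range[OF r, of y] y by auto
    obtain e where e: "e \<in> \<mu>" "fst e = ?x \<or> snd e = ?x" using mm_cover[OF M x] by auto
    have ne: "e \<noteq> (p,q)" using e(2) il_ne[OF r(2), of y] by auto
    show "\<exists>e\<in>rm p q \<mu>. fst e = y \<or> snd e = y"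
      apply (rule bexI[of _ "map_prod (dl p q) (dl p q) e"])
      using e ne dl_il[OF r(2), of y] unfolding rm_def by (auto)
  next
    fix z z' assume z: "z \<in> rm p q \<mu>" and z': "z' \<in> rm p q \<mu>"
      and sh: "fst z = fst z' \<or> fst z = snd z' \<or> snd z = fst z' \<or> snd z = snd z'"
    obtain e where ze: "z = map_prod (dl p q) (dl p q) e" and e0: "e \<in> \<mu> - {(p,q)}" using z unfolding rm_def by (rule imageE)
    obtain e' where ze': "z' = map_prod (dl p q) (dl p q) e'" and e0': "e' \<in> \<mu> - {(p,q)}" using z' unfolding rm_def by (rule imageE)
    have e: "e \<in> \<mu>" "e \<noteq> (p,q)" using e0 by auto
    have e': "e' \<in> \<mu>" "e' \<noteq> (p,q)" using e0' by auto
    have o: "fst e \<noteq> p \<and> fst e \<noteq> q \<and> snd e \<noteq> p \<and> snd e \<noteq> q" using mm_other[OF M pq e] .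
    have o': "fst e' \<noteq> p \<and> fst e' \<noteq> q \<and> snd e' \<noteq> p \<and> snd e' \<noteq> q" using mm_other[OF M pq e'] .
    have "fst e = fst e' \<or> fst e = snd e' \<or> snd e = fst e' \<or> snd e = snd e'"
    proof -
      have D: "u = v" if "u \<in> {fst e, snd e}" "v \<in> {fst e', snd e'}" "dl p q u = dl p q v" for u v
        using o o' dl_inj[OF r(2), of u v] that by blast
      show ?thesis using sh unfolding ze ze' map_prod_def split_def fst_conv snd_conv
        using D[of "fst e" "fst e'"] D[of "fst e" "snd e'"] D[of "snd e" "fst e'"] D[of "snd e" "snd e'"] by blast
    qed
    hence "e = e'" using mm_uniq[OF M e(1) e'(1)] by blast
    thus "z = z'" using ze ze' by simp
  qed
qed

lemma ad_mm:
  assumes M: "mm n \<nu>" and r: "1 \<le> p" "p < q" "q \<le> 2*n+2"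
  shows "mm (Suc n) (ad p q \<nu>)"
  unfolding mm_def
proof (intro conjI ballI impI)
  fix z assume "z \<in> ad p q \<nu>"
  then consider "z = (p,q)" | e where "e \<in> \<nu>" "z = map_prod (il p q) (il p q) e" unfolding ad_def by auto
  thus "case z of (a,b) \<Rightarrow> 1 \<le> a \<and> a < b \<and> b \<le> 2*Suc n"
  proof cases
    case 1 thus ?thesis using r by auto
  next
    case (2 e)
    have re: "1 \<le> fst e \<and> fst e < snd e \<and> snd e \<le> 2*n" using mm_range[OF M 2(1)] by simp
    thus ?thesis using 2 il_range[OF r, of "fst e"] il_range[OF r, of "snd e"] il_mono[OF r(2), of "fst e" "snd e"]
      by (cases e) auto
  qed
next
  fix x assume x: "x \<in> {1..2*Suc n}"
  show "\<exists>e\<in>ad p q \<nu>. fst e = x \<or> snd e = x"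
  proof (cases "x = p \<or> x = q")
    case True thus ?thesis unfolding ad_def by auto
  next
    case False
    have "dl p q x \<in> {1..2*n}" using dl_range[OF r, of x] x False by auto
    then obtain e where e: "e \<in> \<nu>" "fst e = dl p q x \<or> snd e = dl p q x" using mm_cover[OF M] by blast
    show ?thesis
      apply (rule bexI[of _ "map_prod (il p q) (il p q) e"])
      using e False il_dl[OF r(2), of x] unfolding ad_def by auto
  qed
next
  fix z z' assume z: "z \<in> ad p q \<nu>" and z': "z' \<in> ad p q \<nu>"
      and sh: "fst z = fst z' \<or> fst z = snd z' \<or> snd z = fst z' \<or> snd z = snd z'"
  have A: "z = (p,q) \<or> (\<exists>e\<in>\<nu>. z = map_prod (il p q) (il p q) e)" using z unfolding ad_def by (simp only: insert_iff image_iff)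
  have B: "z' = (p,q) \<or> (\<exists>e\<in>\<nu>. z' = map_prod (il p q) (il p q) e)" using z' unfolding ad_def by (simp only: insert_iff image_iff)
  have ne: "\<And>y. il p q y \<noteq> p \<and> il p q y \<noteq> q" using il_ne[OF r(2)] by blast
  have ne': "\<And>y. p \<noteq> il p q y \<and> q \<noteq> il p q y" using ne by metis
  have inj: "\<And>y y'. il p q y = il p q y' \<Longrightarrow> y = y'" by (metis dl_il r(2))
  show "z = z'"
  proof -
    { assume "z = (p,q)" "z' = (p,q)" hence ?thesis by simp }
    moreover
    { fix e assume "z = (p,q)" "e \<in> \<nu>" "z' = map_prod (il p q) (il p q) e"
      hence False using sh ne ne' r(2) by (cases e) auto }
    moreover
    { fix e assume "z' = (p,q)" "e \<in> \<nu>" "z = map_prod (il p q) (il p q) e"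
      hence False using sh ne ne' r(2) by (cases e) auto }
    moreover
    { fix e e' assume e: "e \<in> \<nu>" "z = map_prod (il p q) (il p q) e" and e': "e' \<in> \<nu>" "z' = map_prod (il p q) (il p q) e'"
      have "fst e = fst e' \<or> fst e = snd e' \<or> snd e = fst e' \<or> snd e = snd e'"
        using sh unfolding e(2) e'(2) map_prod_def split_def fst_conv snd_conv
        using inj[of "fst e" "fst e'"] inj[of "fst e" "snd e'"] inj[of "snd e" "fst e'"] inj[of "snd e" "snd e'"] by blast
      hence "e = e'" using mm_uniq[OF M e(1) e'(1)] by blast
      hence ?thesis using e e' by simp }
    ultimately show ?thesis using A B by blast
  qed
qed

lemma rm_ad: "p < q \<Longrightarrow> rm p q (ad p q \<nu>) = \<nu>"
proof -
  assume r: "p < q"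
  have "ad p q \<nu> - {(p,q)} = map_prod (il p q) (il p q) ` \<nu>"
    unfolding ad_def using il_ne[OF r] by auto
  thus ?thesis unfolding rm_def using dl_il[OF r] by (simp add: image_image map_prod.comp comp_def map_prod_def split_def)
qed

lemma ad_rm:
  assumes M: "mm (Suc n) \<mu>" and pq: "(p,q) \<in> \<mu>"
  shows "ad p q (rm p q \<mu>) = \<mu>"
proof -
  have r: "p < q" using mm_range[OF M pq] by auto
  have E: "\<forall>e\<in>\<mu> - {(p,q)}. map_prod (il p q) (il p q) (map_prod (dl p q) (dl p q) e) = e"
  proof
    fix e assume "e \<in> \<mu> - {(p,q)}"
    thus "map_prod (il p q) (il p q) (map_prod (dl p q) (dl p q) e) = e"
      using mm_other[OF M pq, of e] il_dl[OF r] by (cases e) auto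
  qed
  have "map_prod (il p q) (il p q) ` rm p q \<mu> = \<mu> - {(p,q)}"
    unfolding rm_def image_image using image_cong[OF refl, of "\<mu> - {(p,q)}" _ "\<lambda>e. e"] E by simp
  thus ?thesis unfolding ad_def using pq by auto
qed

lemma arith1: "a+1 < b-1 \<Longrightarrow> x \<noteq> a \<Longrightarrow> x \<noteq> b \<Longrightarrow> x \<noteq> a+1 \<Longrightarrow> x \<noteq> b-1 \<Longrightarrow> x \<noteq> b-2
  \<Longrightarrow> il (a+1) (b-1) (dl (a+1) (b-1) x + 1) = x+1"
  by (auto simp: il_def dl_def)
lemma arith2: "a+1 < b-1 \<Longrightarrow> il (a+1) (b-1) (dl (a+1) (b-1) (b-2) + 1) = b"
  by (auto simp: il_def dl_def)
lemma arith3: "a+1 < b-1 \<Longrightarrow> 1 \<le> y \<Longrightarrow> y \<noteq> a \<Longrightarrow> y \<noteq> b \<Longrightarrow> y \<noteq> a+1 \<Longrightarrow> y \<noteq> b-1 \<Longrightarrow> y \<noteq> a+2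
  \<Longrightarrow> il (a+1) (b-1) (dl (a+1) (b-1) y - 1) = y-1"
  by (auto simp: il_def dl_def)
lemma arith4: "a+1 < b-1 \<Longrightarrow> a+2 \<noteq> b-1 \<Longrightarrow> il (a+1) (b-1) (dl (a+1) (b-1) (a+2) - 1) = a"
  by (auto simp: il_def dl_def)
lemma arith5: "a+1 < b-1 \<Longrightarrow> il (a+1) (b-1) (dl (a+1) (b-1) a + 1) = (if a+3 < b then a+2 else a+3)"
  by (auto simp: il_def dl_def)
lemma arith6: "a+1 < b-1 \<Longrightarrow> il (a+1) (b-1) (dl (a+1) (b-1) b - 1) = (if a+3 < b then b-2 else a)"
  by (auto simp: il_def dl_def)

lemma mem_rm_iff:
  assumes M: "mm (Suc n) \<mu>" and pq: "(p,q) \<in> \<mu>"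
  shows "z \<in> rm p q \<mu> \<longleftrightarrow> map_prod (il p q) (il p q) z \<in> \<mu> - {(p,q)}"
proof -
  have r: "p < q" using mm_range[OF M pq] by auto
  show ?thesis
  proof
    assume "z \<in> rm p q \<mu>"
    then obtain e where z: "z = map_prod (dl p q) (dl p q) e" and e0: "e \<in> \<mu> - {(p,q)}" unfolding rm_def by (rule imageE)
    have "map_prod (il p q) (il p q) z = e" using z mm_other[OF M pq, of e] e0 il_dl[OF r] by (cases e) auto
    thus "map_prod (il p q) (il p q) z \<in> \<mu> - {(p,q)}" using e0 by simp
  next
    assume H: "map_prod (il p q) (il p q) z \<in> \<mu> - {(p,q)}"
    have "map_prod (dl p q) (dl p q) (map_prod (il p q) (il p q) z) = z" using dl_il[OF r] by (cases z) auto
    thus "z \<in> rm p q \<mu>" unfolding rm_def using H by (metis imageI)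
  qed
qed

lemma occ_key:
  assumes M: "mm (Suc n) \<mu>" and ab: "(a,b) \<in> \<mu>" and pq: "(a+1,b-1) \<in> \<mu>"
    and e: "(x,y) \<in> \<mu>" "(x,y) \<noteq> (a+1,b-1)"
  shows "(il (a+1) (b-1) (dl (a+1) (b-1) x + 1), il (a+1) (b-1) (dl (a+1) (b-1) y - 1)) \<in> \<mu> - {(a+1,b-1)}
     \<longleftrightarrow> ((x,y) \<noteq> (a,b) \<and> (x+1,y-1) \<in> \<mu>) \<or> ((x,y) = (a,b) \<and> (a+2,b-2) \<in> \<mu>)"
proof -
  have r: "a+1 < b-1" using mm_range[OF M pq] by auto
  have ry: "1 \<le> x" "x < y" using mm_range[OF M e(1)] by auto
  have abr: "a < b" using mm_range[OF M ab] by auto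
  have nofst: "(b, u) \<notin> \<mu>" for u
  proof
    assume h: "(b,u) \<in> \<mu>"
    have "(b,u) = (a,b)" using mm_uniq[OF M h ab] by simp
    thus False using abr by simp
  qed
  have nosnd: "(u, a) \<notin> \<mu>" for u
  proof
    assume h: "(u,a) \<in> \<mu>"
    have "(u,a) = (a,b)" using mm_uniq[OF M h ab] by simp
    thus False using abr by simp
  qed
  have nofstq: "u = b-1" if h: "(b-1, u) \<in> \<mu>" for u
  proof -
    have "(b-1,u) = (a+1,b-1)" using mm_uniq[OF M h pq] by simp
    thus ?thesis using r by simp
  qed
  have nosndp: "u = a+1" if h: "(u, a+1) \<in> \<mu>" for u
  proof -
    have "(u,a+1) = (a+1,b-1)" using mm_uniq[OF M h pq] by simp
    thus ?thesis using r by simp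
  qed
  show ?thesis
  proof (cases "(x,y) = (a,b)")
    case True
    hence xy: "x = a" "y = b" by auto
    show ?thesis
    proof (cases "a+3 < b")
      case True
      have "(a+2, b-2) \<noteq> (a+1,b-1)" by auto
      thus ?thesis using xy arith5[OF r] arith6[OF r] True by simp
    next
      case False
      have "(a+3, a) \<notin> \<mu>" using nosnd by blast
      moreover have "(a+2, b-2) \<notin> \<mu>" using mm_range[OF M, of "(a+2,b-2)"] False by auto
      ultimately show ?thesis using xy arith5[OF r] arith6[OF r] False by simp
    qed
  next
    case False
    have o: "x \<noteq> a+1 \<and> x \<noteq> b-1 \<and> y \<noteq> a+1 \<and> y \<noteq> b-1" using mm_other[OF M pq e(1)] e(2) by auto
    have o2: "x \<noteq> a \<and> x \<noteq> b \<and> y \<noteq> a \<and> y \<noteq> b" 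
    proof -
      have "\<not>(x = a \<or> x = b \<or> y = a \<or> y = b)" using mm_uniq[OF M e(1) ab] False unfolding fst_conv snd_conv by blast
      thus ?thesis by blast
    qed
    have L: "il (a+1) (b-1) (dl (a+1) (b-1) x + 1) = (if x = b-2 then b else x+1)"
      using arith1[OF r, of x] arith2[OF r] o o2 by (cases "x = b-2") simp_all
    have R: "il (a+1) (b-1) (dl (a+1) (b-1) y - 1) = (if y = a+2 then a else y-1)"
      using arith3[OF r, of y] arith4[OF r] o o2 ry by (cases "y = a+2") simp_all
    show ?thesis
    proof (cases "x = b-2")
      case True
      have "(x+1, y-1) \<notin> \<mu>"
      proof
        assume "(x+1, y-1) \<in> \<mu>"
        moreover have "x+1 = b-1" using True r by arith
        ultimately have "(b-1, y-1) \<in> \<mu>" by simp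
        hence "y - 1 = b - 1" using nofstq by blast
        thus False using o2 ry r by auto
      qed
      thus ?thesis using L True nofst False by auto
    next
      case x: False
      show ?thesis
      proof (cases "y = a+2")
        case True
        have "(x+1, y-1) \<notin> \<mu>"
        proof
          assume "(x+1, y-1) \<in> \<mu>"
          hence "(x+1, a+1) \<in> \<mu>" using True by simp
          hence "x+1 = a+1" using nosndp by blast
          thus False using o2 by auto
        qed
        thus ?thesis using L R True nosnd False x by auto
      next
        case y: False
        have "(x+1, y-1) \<noteq> (a+1, b-1)" using o2 by auto
        thus ?thesis using L R x y False by auto
      qed
    qed
  qed
qed

definition occ :: "(nat \<times> nat) set \<Rightarrow> (nat \<times> nat) set" where
  "occ \<mu> = {e\<in>\<mu>. (fst e + 1, snd e - 1) \<in> \<mu>}"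

lemma mm_sub: "mm n \<mu> \<Longrightarrow> \<mu> \<subseteq> {1..2*n} \<times> {1..2*n}"
  using mm_range by fastforce
lemma mm_finite: "mm n \<mu> \<Longrightarrow> finite \<mu>"
  using mm_sub finite_subset by blast
lemma finite_mms: "finite {\<mu>. mm n \<mu>}"
proof -
  have "{\<mu>. mm n \<mu>} \<subseteq> Pow ({1..2*n} \<times> {1..2*n})" using mm_sub by blast
  thus ?thesis by (rule finite_subset) simp
qed
lemma occ_sub: "occ \<mu> \<subseteq> \<mu>" unfolding occ_def by auto

lemma rm_inj:
  assumes M: "mm (Suc n) \<mu>" and pq: "(p,q) \<in> \<mu>"
  shows "inj_on (map_prod (dl p q) (dl p q)) (\<mu> - {(p,q)})"
proof (rule inj_onI)
  fix e e' assume e: "e \<in> \<mu> - {(p,q)}" and e': "e' \<in> \<mu> - {(p,q)}"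
    and eq: "map_prod (dl p q) (dl p q) e = map_prod (dl p q) (dl p q) e'"
  have r: "p < q" using mm_range[OF M pq] by auto
  have "map_prod (il p q) (il p q) (map_prod (dl p q) (dl p q) e) = e"
    using mm_other[OF M pq, of e] e il_dl[OF r] by (cases e) auto
  moreover have "map_prod (il p q) (il p q) (map_prod (dl p q) (dl p q) e') = e'"
    using mm_other[OF M pq, of e'] e' il_dl[OF r] by (cases e') auto
  ultimately show "e = e'" using eq by metis
qed

lemma occ_rm:
  assumes M: "mm (Suc n) \<mu>" and ab: "(a,b) \<in> \<mu>" and pq: "(a+1,b-1) \<in> \<mu>"
  shows "card (occ \<mu>) = Suc (card (occ (rm (a+1) (b-1) \<mu>)))"
proof -
  define p where "p = a+1"
  define q where "q = b-1"
  define f where "f = map_prod (dl p q) (dl p q)"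
  define P where "P e \<longleftrightarrow> (e \<noteq> (a,b) \<and> e \<in> occ \<mu>) \<or> (e = (a,b) \<and> (a+2,b-2) \<in> \<mu>)" for e
  define S where "S = {e \<in> \<mu> - {(p,q)}. P e}"
  have pq': "(p,q) \<in> \<mu>" using pq p_def q_def by simp
  have r: "a+1 < b-1" using mm_range[OF M pq] by auto
  have key: "f e \<in> occ (rm p q \<mu>) \<longleftrightarrow> P e" if e: "e \<in> \<mu> - {(p,q)}" for e
  proof -
    obtain x y where xy: "e = (x,y)" by fastforce
    have fe: "f e \<in> rm p q \<mu>" unfolding rm_def f_def using e by blast
    have "f e \<in> occ (rm p q \<mu>) \<longleftrightarrow> (fst (f e) + 1, snd (f e) - 1) \<in> rm p q \<mu>"
      unfolding occ_def using fe by blast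
    also have "\<dots> \<longleftrightarrow> (il p q (dl p q x + 1), il p q (dl p q y - 1)) \<in> \<mu> - {(p,q)}"
      using mem_rm_iff[OF M pq'] xy f_def by simp
    also have "\<dots> \<longleftrightarrow> P e"
      using occ_key[OF M ab pq, of x y] e xy unfolding p_def q_def P_def occ_def by auto
    finally show ?thesis .
  qed
  have occE: "occ (rm p q \<mu>) = f ` S"
  proof
    show "occ (rm p q \<mu>) \<subseteq> f ` S"
    proof
      fix z assume z: "z \<in> occ (rm p q \<mu>)"
      hence "z \<in> rm p q \<mu>" using occ_sub by blast
      then obtain e where ze: "z = f e" and e: "e \<in> \<mu> - {(p,q)}" unfolding rm_def f_def by (rule imageE)
      have "P e" using key[OF e] z ze by simp
      thus "z \<in> f ` S" using ze e S_def by blast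
    qed
  next
    show "f ` S \<subseteq> occ (rm p q \<mu>)"
    proof
      fix z assume "z \<in> f ` S"
      then obtain e where ze: "z = f e" and e: "e \<in> S" by (rule imageE)
      thus "z \<in> occ (rm p q \<mu>)" using key[of e] S_def by simp
    qed
  qed
  have injS: "inj_on f S" using rm_inj[OF M pq'] unfolding f_def S_def by (rule inj_on_subset) blast
  have fin: "finite (occ \<mu>)" using mm_finite[OF M] occ_sub finite_subset by blast
  have abo: "(a,b) \<in> occ \<mu>" unfolding occ_def using ab pq by simp
  have pqo: "(p,q) \<in> occ \<mu> \<longleftrightarrow> (a+2,b-2) \<in> \<mu>" unfolding occ_def using pq' p_def q_def
    by (simp add: numeral_2_eq_2)
  have Sd: "S = occ \<mu> - {if (a+2,b-2) \<in> \<mu> then (p,q) else (a,b)}"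
    unfolding S_def P_def using abo pqo occ_sub by auto
  have cin: "(if (a+2,b-2) \<in> \<mu> then (p,q) else (a,b)) \<in> occ \<mu>" using abo pqo by auto
  have "card (occ (rm p q \<mu>)) = card S" using occE injS card_image by metis
  also have "\<dots> = card (occ \<mu>) - 1" using Sd cin fin by simp
  finally have "card (occ (rm p q \<mu>)) = card (occ \<mu>) - 1" .
  moreover have "card (occ \<mu>) > 0" using fin abo card_gt_0_iff by blast
  ultimately show ?thesis unfolding p_def q_def by simp
qed

lemma first_arc:
  assumes M: "mm (Suc n) \<mu>" shows "\<exists>q\<in>{2..2*n+2}. (1,q) \<in> \<mu>"
proof -
  obtain e where e: "e \<in> \<mu>" "fst e = 1 \<or> snd e = 1" using mm_cover[OF M, of 1] by auto
  have r: "1 \<le> fst e \<and> fst e < snd e \<and> snd e \<le> 2*Suc n" using mm_range[OF M e(1)] .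
  hence "fst e = 1" using e(2) by auto
  hence "e = (1, snd e)" by (cases e) auto
  thus ?thesis using e(1) r \<open>fst e = 1\<close> by (intro bexI[of _ "snd e"]) auto
qed

lemma card_mm: "mm n \<mu> \<Longrightarrow> card \<mu> = n"
proof (induction n arbitrary: \<mu>)
  case 0
  hence "\<mu> = {}" using mm_range[OF 0] by fastforce
  thus ?case by simp
next
  case (Suc n)
  obtain q where q: "(1,q) \<in> \<mu>" using first_arc[OF Suc.prems] by auto
  have "card (rm 1 q \<mu>) = n" using Suc.IH rm_mm[OF Suc.prems q] by blast
  moreover have "card (rm 1 q \<mu>) = card (\<mu> - {(1,q)})"
    unfolding rm_def using rm_inj[OF Suc.prems q] by (rule card_image)
  moreover have "card \<mu> = Suc (card (\<mu> - {(1,q)}))"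
    using card_Suc_Diff1[OF mm_finite[OF Suc.prems] q] by simp
  ultimately show ?case by simp
qed

lemma count_step: "card {\<mu>. mm (Suc n) \<mu>} = (2*n+1) * card {\<mu>. mm n \<mu>}"
proof -
  define B where "B q = {\<mu>. mm (Suc n) \<mu> \<and> (1,q) \<in> \<mu>}" for q
  have U: "{\<mu>. mm (Suc n) \<mu>} = (\<Union>q\<in>{2..2*n+2}. B q)"
    unfolding B_def using first_arc by blast
  have cB: "card (B q) = card {\<mu>. mm n \<mu>}" if q: "q \<in> {2..2*n+2}" for q
  proof -
    have "bij_betw (rm 1 q) (B q) {\<mu>. mm n \<mu>}"
    proof (rule bij_betw_byWitness[where f'="ad 1 q"])
      show "\<forall>a\<in>B q. ad 1 q (rm 1 q a) = a" unfolding B_def using ad_rm by blast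
      show "\<forall>a'\<in>{\<mu>. mm n \<mu>}. rm 1 q (ad 1 q a') = a'" using rm_ad q by auto
      show "rm 1 q ` B q \<subseteq> {\<mu>. mm n \<mu>}" unfolding B_def using rm_mm by blast
      show "ad 1 q ` {\<mu>. mm n \<mu>} \<subseteq> B q" unfolding B_def using ad_mm q by (auto simp: ad_def)
    qed
    thus ?thesis by (rule bij_betw_same_card)
  qed
  have "card {\<mu>. mm (Suc n) \<mu>} = (\<Sum>q\<in>{2..2*n+2}. card (B q))"
    unfolding U
  proof (rule card_UN_disjoint)
    show "\<forall>i\<in>{2..2*n+2}. finite (B i)" unfolding B_def using finite_mms[of "Suc n"] by (auto intro: finite_subset)
    show "\<forall>i\<in>{2..2 * n + 2}. \<forall>j\<in>{2..2 * n + 2}. i \<noteq> j \<longrightarrow> B i \<inter> B j = {}"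
      unfolding B_def using mm_uniq by fastforce
  qed simp
  also have "\<dots> = (\<Sum>q\<in>{2..2*n+2}. card {\<mu>. mm n \<mu>})" using cB by simp
  also have "\<dots> = (2*n+1) * card {\<mu>. mm n \<mu>}" by simp
  finally show ?thesis .
qed

lemma count_all: "card {\<mu>. mm (Suc n) \<mu>} = dfact (2*n+1)"
proof (induction n)
  case 0
  have "{\<mu>. mm 0 \<mu>} = {{}}" unfolding mm_def by auto
  thus ?case using count_step[of 0] by simp
next
  case (Suc n)
  have "dfact (2*Suc n+1) = (2*Suc n+1) * dfact (2*n+1)"
    by (simp add: numeral_2_eq_2)
  thus ?case using count_step[of "Suc n"] Suc.IH by simp
qed

definition EE :: "nat \<Rightarrow> nat \<Rightarrow> nat" where
  "EE j n = card {\<mu>. mm n \<mu> \<and> card (occ \<mu>) = j}"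

lemma rec_step: "Suc j * EE (Suc j) (Suc n) = n * EE j n"
proof -
  define A where "A = {\<mu>. mm (Suc n) \<mu> \<and> card (occ \<mu>) = Suc j}"
  define A' where "A' = {\<nu>. mm n \<nu> \<and> card (occ \<nu>) = j}"
  define X where "X = Sigma A occ"
  define Y where "Y = Sigma A' (\<lambda>\<nu>. \<nu>)"
  define F where "F = (\<lambda>(\<mu>::(nat\<times>nat) set, e::nat\<times>nat). (rm (fst e + 1) (snd e - 1) \<mu>, (fst e, snd e - 2)))"
  define G where "G = (\<lambda>(\<nu>::(nat\<times>nat) set, e::nat\<times>nat). (ad (fst e + 1) (snd e + 1) \<nu>, (fst e, snd e + 2)))"
  have finA: "finite A" unfolding A_def using finite_mms[of "Suc n"] by (auto intro: finite_subset)
  have finA': "finite A'" unfolding A'_def using finite_mms[of n] by (auto intro: finite_subset)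
  have cX: "card X = Suc j * EE (Suc j) (Suc n)"
  proof -
    have "card X = (\<Sum>\<mu>\<in>A. card (occ \<mu>))" unfolding X_def
      using finA by (rule card_SigmaI) (auto simp: A_def intro: finite_subset[OF occ_sub mm_finite])
    also have "\<dots> = (\<Sum>\<mu>\<in>A. Suc j)" unfolding A_def by simp
    finally show ?thesis unfolding EE_def A_def by simp
  qed
  have cY: "card Y = n * EE j n"
  proof -
    have "card Y = (\<Sum>\<mu>\<in>A'. card \<mu>)" unfolding Y_def
      using finA' by (rule card_SigmaI) (auto simp: A'_def intro: mm_finite)
    also have "\<dots> = (\<Sum>\<mu>\<in>A'. n)" by (rule sum.cong) (auto simp: A'_def card_mm)
    finally show ?thesis unfolding EE_def A'_def by simp
  qed
  have "bij_betw F X Y"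
  proof (rule bij_betw_byWitness[where f'=G])
    show "\<forall>x\<in>X. G (F x) = x"
    proof
      fix x assume "x \<in> X"
      then obtain \<mu> a b where x: "x = (\<mu>, (a,b))" and M: "mm (Suc n) \<mu>" and ab: "(a,b) \<in> \<mu>" and pq: "(a+1,b-1) \<in> \<mu>"
        unfolding X_def A_def occ_def by auto
      have r: "a+1 < b-1" using mm_range[OF M pq] by auto
      have "b - 2 + 1 = b - 1" "b - 2 + 2 = b" using r by auto
      thus "G (F x) = x" unfolding x F_def G_def using ad_rm[OF M pq] by simp
    qed
    show "\<forall>y\<in>Y. F (G y) = y"
    proof
      fix y assume "y \<in> Y"
      then obtain \<nu> c d where y: "y = (\<nu>, (c,d))" by (metis prod.collapse)
      have lt: "c + 1 < d + 1" using \<open>y \<in> Y\<close> mm_range[of n \<nu> "(c,d)"] unfolding Y_def A'_def y by auto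
      show "F (G y) = y" unfolding y F_def G_def using rm_ad[OF lt] by simp
    qed
    show "F ` X \<subseteq> Y"
    proof
      fix z assume "z \<in> F ` X"
      then obtain x where z: "z = F x" and xX: "x \<in> X" by (rule imageE)
      then obtain \<mu> a b where x: "x = (\<mu>, (a,b))" and M: "mm (Suc n) \<mu>" and ab: "(a,b) \<in> \<mu>" and pq: "(a+1,b-1) \<in> \<mu>"
        and co: "card (occ \<mu>) = Suc j"
        unfolding X_def A_def occ_def by auto
      have r: "a+1 < b-1" using mm_range[OF M pq] by auto
      have m: "mm n (rm (a+1) (b-1) \<mu>)" by (rule rm_mm[OF M pq])
      have c: "card (occ (rm (a+1) (b-1) \<mu>)) = j" using occ_rm[OF M ab pq] co by simp
      have "map_prod (dl (a+1) (b-1)) (dl (a+1) (b-1)) (a,b) = (a, b-2)" using r by (auto simp: dl_def)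
      moreover have "(a,b) \<in> \<mu> - {(a+1,b-1)}" using ab by simp
      ultimately have "(a, b-2) \<in> rm (a+1) (b-1) \<mu>" unfolding rm_def by (metis imageI)
      thus "z \<in> Y" using m c unfolding z x F_def Y_def A'_def by simp
    qed
    show "G ` Y \<subseteq> X"
    proof
      fix z assume "z \<in> G ` Y"
      then obtain y where z: "z = G y" and yY: "y \<in> Y" by (rule imageE)
      then obtain \<nu> c d where y: "y = (\<nu>, (c,d))" and M: "mm n \<nu>" and cd: "(c,d) \<in> \<nu>" and co: "card (occ \<nu>) = j"
        unfolding Y_def A'_def by auto
      have r: "1 \<le> c" "c < d" "d \<le> 2*n" using mm_range[OF M cd] by auto
      have r': "1 \<le> c+1" "c+1 < d+1" "d+1 \<le> 2*n+2" using r by auto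
      have M': "mm (Suc n) (ad (c+1) (d+1) \<nu>)" by (rule ad_mm[OF M r'])
      have "map_prod (il (c+1) (d+1)) (il (c+1) (d+1)) (c,d) = (c, d+2)" using r by (simp add: il_def)
      hence i1: "(c, d+2) \<in> ad (c+1) (d+1) \<nu>" unfolding ad_def using cd by (metis imageI insertI2)
      have i2: "(c+1, d+2-1) \<in> ad (c+1) (d+1) \<nu>" unfolding ad_def by simp
      have "card (occ (ad (c+1) (d+1) \<nu>)) = Suc (card (occ (rm (c+1) (d+2-1) (ad (c+1) (d+1) \<nu>))))"
        using occ_rm[OF M' i1 i2] .
      also have "\<dots> = Suc j" using rm_ad[OF r'(2)] co by simp
      finally have c1: "card (occ (ad (c+1) (d+1) \<nu>)) = Suc j" .
      have "(c, d+2) \<in> occ (ad (c+1) (d+1) \<nu>)" unfolding occ_def using i1 i2 by simp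
      thus "z \<in> X" using M' c1 unfolding z y G_def X_def A_def by simp
    qed
  qed
  hence "card X = card Y" by (rule bij_betw_same_card)
  thus ?thesis using cX cY by simp
qed

lemma occ_empty: "mm n \<mu> \<Longrightarrow> has_endhered_21 \<mu> \<longleftrightarrow> occ \<mu> \<noteq> {}"
proof
  assume M: "mm n \<mu>" and "has_endhered_21 \<mu>"
  then obtain i j where "(i+1, j+2) \<in> \<mu>" "(i+2, j+1) \<in> \<mu>" unfolding has_endhered_21_def by blast
  hence "(i+1, j+2) \<in> occ \<mu>" unfolding occ_def by (simp add: numeral_2_eq_2)
  thus "occ \<mu> \<noteq> {}" by blast
next
  assume M: "mm n \<mu>" and "occ \<mu> \<noteq> {}"
  then obtain a b where ab: "(a,b) \<in> \<mu>" "(a+1, b-1) \<in> \<mu>" unfolding occ_def by auto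
  have r: "1 \<le> a" "a < b" using mm_range[OF M ab(1)] by auto
  have "(a-1+1, b-2+2) = (a,b)" "(a-1+2, b-2+1) = (a+1,b-1)" using r by auto
  thus "has_endhered_21 \<mu>" unfolding has_endhered_21_def using ab by metis
qed

lemma a0_EE: "a0 m = EE 0 m"
proof -
  have "{\<mu>. is_matching m \<mu> \<and> \<not> has_endhered_21 \<mu>} = {\<mu>. mm m \<mu> \<and> card (occ \<mu>) = 0}"
  proof (intro Collect_cong iffI)
    fix \<mu> assume "is_matching m \<mu> \<and> \<not> has_endhered_21 \<mu>"
    thus "mm m \<mu> \<and> card (occ \<mu>) = 0" using matching_iff occ_empty by auto
  next
    fix \<mu> assume H: "mm m \<mu> \<and> card (occ \<mu>) = 0"
    hence "occ \<mu> = {}" using mm_finite occ_sub finite_subset by (metis card_0_eq)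
    thus "is_matching m \<mu> \<and> \<not> has_endhered_21 \<mu>" using matching_iff occ_empty H by auto
  qed
  thus ?thesis unfolding a0_def EE_def by simp
qed

lemma EE_formula: "EE j (Suc n) = (n choose j) * a0 (Suc n - j)"
proof (induction j arbitrary: n)
  case 0 thus ?case using a0_EE by simp
next
  case (Suc j)
  show ?case
  proof (cases n)
    case 0
    thus ?thesis using rec_step[of j 0] by simp
  next
    case (Suc m)
    have "Suc j * EE (Suc j) (Suc n) = n * EE j n" by (rule rec_step)
    also have "\<dots> = Suc m * (m choose j) * a0 (Suc m - j)" using Suc.IH[of m] \<open>n = Suc m\<close> by (simp add: algebra_simps)
    also have "\<dots> = Suc j * ((Suc m choose Suc j) * a0 (Suc m - j))"
    proof -
      have h: "Suc m * (m choose j) = (Suc m choose Suc j) * Suc j" by (rule Suc_times_binomial_eq)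
      show ?thesis by (simp only: h mult_ac)
    qed
    finally have eq: "Suc j * EE (Suc j) (Suc n) = Suc j * ((Suc m choose Suc j) * a0 (Suc m - j))" .
    have "EE (Suc j) (Suc n) = (Suc m choose Suc j) * a0 (Suc m - j)"
      using eq mult_left_cancel[of "Suc j" "EE (Suc j) (Suc n)" "(Suc m choose Suc j) * a0 (Suc m - j)"] by (simp only: nat.distinct simp_thms)
    thus ?thesis using \<open>n = Suc m\<close> by simp
  qed
qed

lemma sum_formula: "dfact (2*n+1) = (\<Sum>k=0..n. (n choose k) * a0 (k+1))"
proof -
  define C where "C j = {\<mu>. mm (Suc n) \<mu> \<and> card (occ \<mu>) = j}" for j
  have U: "{\<mu>. mm (Suc n) \<mu>} = (\<Union>j\<in>{0..Suc n}. C j)"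
  proof (intro set_eqI iffI)
    fix \<mu> assume "\<mu> \<in> {\<mu>. mm (Suc n) \<mu>}"
    hence M: "mm (Suc n) \<mu>" by simp
    have "card (occ \<mu>) \<le> card \<mu>" using card_mono[OF mm_finite[OF M] occ_sub] .
    thus "\<mu> \<in> (\<Union>j\<in>{0..Suc n}. C j)" using card_mm[OF M] M unfolding C_def by auto
  qed (auto simp: C_def)
  have "dfact (2*n+1) = card {\<mu>. mm (Suc n) \<mu>}" using count_all by simp
  also have "\<dots> = card (\<Union>j\<in>{0..Suc n}. C j)" using U by simp
  also have "\<dots> = (\<Sum>j=0..Suc n. card (C j))"
    by (rule card_UN_disjoint) (auto simp: C_def intro: finite_subset[OF _ finite_mms[of "Suc n"]])
  also have "\<dots> = (\<Sum>j=0..Suc n. (n choose j) * a0 (Suc n - j))"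
    using EE_formula unfolding C_def EE_def by simp
  also have "\<dots> = (\<Sum>j=0..n. (n choose j) * a0 (Suc n - j))" by simp
  also have "\<dots> = (\<Sum>j=0..n. (n choose (n - j)) * a0 (Suc (n - j)))"
  proof (rule sum.cong[OF refl])
    fix j assume "j \<in> {0..n}"
    hence j: "j \<le> n" by simp
    show "(n choose j) * a0 (Suc n - j) = (n choose (n - j)) * a0 (Suc (n - j))"
      using binomial_symmetric[OF j] Suc_diff_le[OF j] by simp
  qed
  also have "\<dots> = (\<Sum>k=0..n. (n choose k) * a0 (k+1))"
    using sum.atLeastAtMost_rev[of "\<lambda>k. (n choose k) * a0 (k+1)" 0 n] by simp
  finally show ?thesis .
qed

lemma alt: "(\<Sum>t\<le>m. (-1)^(m-t) * int (m choose t)) = (if m = 0 then 1 else 0)"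
proof -
  have "(1 + (-1::int))^m = (\<Sum>t\<le>m. int (m choose t) * 1^t * (-1)^(m-t))" by (rule binomial_ring)
  thus ?thesis by (cases m) (simp_all add: mult_ac)
qed

lemma inner:
  assumes "i \<le> n"
  shows "(\<Sum>k=0..n. (-1)^(n-k) * int (n choose k) * int (k choose i)) = (if i = n then 1 else 0)"
proof -
  have "(\<Sum>k=0..n. (-1)^(n-k) * int (n choose k) * int (k choose i))
      = (\<Sum>k=i..n. (-1)^(n-k) * int (n choose k) * int (k choose i))"
  proof -
    have "{0..n} = {0..<i} \<union> {i..n}" using assms by auto
    moreover have "(\<Sum>k=0..<i. (-1)^(n-k) * int (n choose k) * int (k choose i)) = 0"
      by (intro sum.neutral) (auto simp: binomial_eq_0)
    moreover have "(\<Sum>k\<in>{0..<i} \<union> {i..n}. (-1)^(n-k) * int (n choose k) * int (k choose i))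
       = (\<Sum>k=0..<i. (-1)^(n-k) * int (n choose k) * int (k choose i)) + (\<Sum>k=i..n. (-1)^(n-k) * int (n choose k) * int (k choose i))"
      by (rule sum.union_disjoint) auto
    ultimately show ?thesis by simp
  qed
  also have "\<dots> = (\<Sum>k=i..n. (-1)^(n-k) * int (n choose i) * int ((n-i) choose (k-i)))"
    by (rule sum.cong) (auto simp: choose_mult mult.assoc simp flip: of_nat_mult)
  also have "\<dots> = (\<Sum>t=0..n-i. (-1)^(n-i-t) * int (n choose i) * int ((n-i) choose t))"
    using sum.shift_bounds_cl_nat_ivl[of "\<lambda>k. (-1)^(n-k) * int (n choose i) * int ((n-i) choose (k-i))" 0 i "n-i"] assms
    by (simp add: add.commute)
  also have "\<dots> = int (n choose i) * (\<Sum>t=0..n-i. (-1)^(n-i-t) * int ((n-i) choose t))"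
    unfolding sum_distrib_left by (rule sum.cong[OF refl]) (simp only: mult_ac)
  also have "\<dots> = (if i = n then 1 else 0)" using alt[of "n-i"] assms by (simp add: atLeast0AtMost)
  finally show ?thesis .
qed

lemma ext_sum:
  assumes "k \<le> n"
  shows "int (dfact (2*k+1)) = (\<Sum>i=0..n. int (k choose i) * int (a0 (i+1)))"
proof -
  have "int (dfact (2*k+1)) = (\<Sum>i=0..k. int (k choose i) * int (a0 (i+1)))"
    using sum_formula[of k] by (simp flip: of_nat_mult)
  also have "\<dots> = (\<Sum>i=0..n. int (k choose i) * int (a0 (i+1)))"
    by (rule sum.mono_neutral_right[symmetric]) (use assms in \<open>auto simp: binomial_eq_0\<close>)
  finally show ?thesis .
qed

theorem lemma3:
  fixes n :: nat
  shows "int (a0 (n+1)) =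
    (\<Sum>k=0..n. (-1) ^ (n-k) * int (n choose k) * int (dfact (2*k+1)))"
proof -
  have "(\<Sum>k=0..n. (-1) ^ (n-k) * int (n choose k) * int (dfact (2*k+1)))
      = (\<Sum>k=0..n. (-1) ^ (n-k) * int (n choose k) * (\<Sum>i=0..n. int (k choose i) * int (a0 (i+1))))"
    by (rule sum.cong[OF refl]) (use ext_sum in simp)
  also have "\<dots> = (\<Sum>k=0..n. \<Sum>i=0..n. int (a0 (i+1)) * ((-1) ^ (n-k) * int (n choose k) * int (k choose i)))"
    by (simp add: sum_distrib_left mult_ac)
  also have "\<dots> = (\<Sum>i=0..n. \<Sum>k=0..n. int (a0 (i+1)) * ((-1) ^ (n-k) * int (n choose k) * int (k choose i)))"
    by (rule sum.swap)
  also have "\<dots> = (\<Sum>i=0..n. int (a0 (i+1)) * (if i = n then 1 else 0))"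
    by (rule sum.cong[OF refl]) (simp add: inner flip: sum_distrib_left)
  also have "\<dots> = (\<Sum>i=0..n. (if i = n then int (a0 (i+1)) else 0))"
    by (rule sum.cong[OF refl]) simp
  also have "\<dots> = int (a0 (n+1))" using sum.delta[of "{0..n}" n "\<lambda>i. int (a0 (i+1))"] by simp
  finally show ?thesis by simp
qed

end
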